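(* Let $(X,Y)$ be distributed according to an $(\alpha,\lambda)$-locally consistent RBM with $\alpha>0$. Then for every observed node $u$, the two-hop Markov neighborhood of $u$ equals $N_2(u)\setminus\{u\}$.
   Context: A Restricted Boltzmann Machine (RBM) with $n$ observed variables $X\in\{\pm1\}^n$ (indexed by $V_{obs}=[n]$) and $m$ latent variables $Y\in\{\pm1\}^m$ (indexed by $V_{lat}=[m]$) is the distribution $\Pr[X=x,Y=y]=\frac1Z\exp(x^TJy+h^Tx+g^Ty)$, where $J\in\mathbb R^{n\times m}$, $h\in\mathbb R^n$, $g\in\mathbb R^m$ are arbitrary and $Z$ is the normalizing constant. Its edge set is $E=\{(i,j):J_{ij}\neq0\}$. The RBM is $(\alpha,\lambda)$-locally consistent if: (i) for each $j\in[m]$, either $J_{ij}\ge0$ for all $i$ or $J_{ij}\le0$ for all $i$; (ii) $|J_{ij}|\ge\alpha$ for every $(i,j)\in E$; (iii) $\sum_j|J_{ij}|+|h_i|\le\lambda$ for all $i\in[n]$; (iv) $\sum_i|J_{ij}|+|g_j|\le\lambda$ for all $j\in[m]$. $N_2(u)=\{i\in V_{obs}:\exists j\in[m],\ J_{ij}\ne0,\ J_{uj}\neq0\}$. The two-hop Markov neighborhood of $u$ is the smallest set $S\subseteq V_{obs}\setminus\{u\}$ such that, conditioned on $X_S$, $X_u$ is independent of $X_v$ for every $v\in V_{obs}\setminus(S\cup\{u\})$. *)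

theory Defs
  imports Complex_Main
begin

text \<open>Observed nodes are indexed by {..<n}, latent nodes by {..<m} (0-based).
  Spin configurations are functions nat => real with values in {-1,1}
  on the index range and 0 outside (canonical representatives).\<close>

definition spins :: "nat \<Rightarrow> (nat \<Rightarrow> real) set" where
  "spins k = {x. (\<forall>i<k. x i = -1 \<or> x i = 1) \<and> (\<forall>i\<ge>k. x i = 0)}"

definition rbm_weight ::
  "nat \<Rightarrow> nat \<Rightarrow> (nat \<Rightarrow> nat \<Rightarrow> real) \<Rightarrow> (nat \<Rightarrow> real) \<Rightarrow> (nat \<Rightarrow> real)
   \<Rightarrow> (nat \<Rightarrow> real) \<Rightarrow> (nat \<Rightarrow> real) \<Rightarrow> real" where
  "rbm_weight n m J h g x y =
     exp ((\<Sum>i<n. \<Sum>j<m. x i * J i j * y j) + (\<Sum>i<n. h i * x i) + (\<Sum>j<m. g j * y j))"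

definition rbm_Z ::
  "nat \<Rightarrow> nat \<Rightarrow> (nat \<Rightarrow> nat \<Rightarrow> real) \<Rightarrow> (nat \<Rightarrow> real) \<Rightarrow> (nat \<Rightarrow> real) \<Rightarrow> real" where
  "rbm_Z n m J h g = (\<Sum>x\<in>spins n. \<Sum>y\<in>spins m. rbm_weight n m J h g x y)"

definition obs_marg ::
  "nat \<Rightarrow> nat \<Rightarrow> (nat \<Rightarrow> nat \<Rightarrow> real) \<Rightarrow> (nat \<Rightarrow> real) \<Rightarrow> (nat \<Rightarrow> real)
   \<Rightarrow> nat set \<Rightarrow> (nat \<Rightarrow> real) \<Rightarrow> real" where
  "obs_marg n m J h g A a =
     (\<Sum>x\<in>{x\<in>spins n. \<forall>i\<in>A. x i = a i}. \<Sum>y\<in>spins m. rbm_weight n m J h g x y)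
       / rbm_Z n m J h g"

definition obs_cond_indep ::
  "nat \<Rightarrow> nat \<Rightarrow> (nat \<Rightarrow> nat \<Rightarrow> real) \<Rightarrow> (nat \<Rightarrow> real) \<Rightarrow> (nat \<Rightarrow> real)
   \<Rightarrow> nat \<Rightarrow> nat \<Rightarrow> nat set \<Rightarrow> bool" where
  "obs_cond_indep n m J h g u v S =
     (\<forall>x\<in>spins n.
        obs_marg n m J h g (insert u (insert v S)) x * obs_marg n m J h g S x =
        obs_marg n m J h g (insert u S) x * obs_marg n m J h g (insert v S) x)"

definition markov_separating ::
  "nat \<Rightarrow> nat \<Rightarrow> (nat \<Rightarrow> nat \<Rightarrow> real) \<Rightarrow> (nat \<Rightarrow> real) \<Rightarrow> (nat \<Rightarrow> real)
   \<Rightarrow> nat \<Rightarrow> nat set \<Rightarrow> bool" where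
  "markov_separating n m J h g u S =
     (S \<subseteq> {..<n} - {u} \<and>
      (\<forall>v\<in>{..<n} - (S \<union> {u}). obs_cond_indep n m J h g u v S))"

definition is_two_hop_markov_nbhd ::
  "nat \<Rightarrow> nat \<Rightarrow> (nat \<Rightarrow> nat \<Rightarrow> real) \<Rightarrow> (nat \<Rightarrow> real) \<Rightarrow> (nat \<Rightarrow> real)
   \<Rightarrow> nat \<Rightarrow> nat set \<Rightarrow> bool" where
  "is_two_hop_markov_nbhd n m J h g u S =
     (markov_separating n m J h g u S \<and>
      (\<forall>S'. markov_separating n m J h g u S' \<longrightarrow> S \<subseteq> S'))"

definition N2 :: "nat \<Rightarrow> nat \<Rightarrow> (nat \<Rightarrow> nat \<Rightarrow> real) \<Rightarrow> nat \<Rightarrow> nat set" where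
  "N2 n m J u = {i. i < n \<and> (\<exists>j<m. J i j \<noteq> 0 \<and> J u j \<noteq> 0)}"

definition locally_consistent ::
  "nat \<Rightarrow> nat \<Rightarrow> (nat \<Rightarrow> nat \<Rightarrow> real) \<Rightarrow> (nat \<Rightarrow> real) \<Rightarrow> (nat \<Rightarrow> real)
   \<Rightarrow> real \<Rightarrow> real \<Rightarrow> bool" where
  "locally_consistent n m J h g \<alpha> lam =
     ((\<forall>j<m. (\<forall>i<n. J i j \<ge> 0) \<or> (\<forall>i<n. J i j \<le> 0)) \<and>
      (\<forall>i<n. \<forall>j<m. J i j \<noteq> 0 \<longrightarrow> \<bar>J i j\<bar> \<ge> \<alpha>) \<and>
      (\<forall>i<n. (\<Sum>j<m. \<bar>J i j\<bar>) + \<bar>h i\<bar> \<le> lam) \<and>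
      (\<forall>j<m. (\<Sum>i<n. \<bar>J i j\<bar>) + \<bar>g j\<bar> \<le> lam))"

end

theory Submission
  imports Defs
begin

definition supf :: "(nat\<Rightarrow>real) \<Rightarrow> (nat\<Rightarrow>real) \<Rightarrow> (nat\<Rightarrow>real)" where
  "supf x y = (\<lambda>i. max (x i) (y i))"
definition inff :: "(nat\<Rightarrow>real) \<Rightarrow> (nat\<Rightarrow>real) \<Rightarrow> (nat\<Rightarrow>real)" where
  "inff x y = (\<lambda>i. min (x i) (y i))"
definition DF :: "nat set \<Rightarrow> (nat\<Rightarrow>real) \<Rightarrow> (nat\<Rightarrow>real) set" where
  "DF F z = {x. (\<forall>i\<in>F. x i = 1 \<or> x i = -1) \<and> (\<forall>i. i \<notin> F \<longrightarrow> x i = z i)}"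
definition SF :: "nat set \<Rightarrow> ((nat\<Rightarrow>real) \<Rightarrow> real) \<Rightarrow> (nat\<Rightarrow>real) \<Rightarrow> real" where
  "SF F \<phi> z = (\<Sum>x\<in>DF F z. \<phi> x)"
definition margk :: "nat \<Rightarrow> ((nat\<Rightarrow>real) \<Rightarrow> real) \<Rightarrow> (nat\<Rightarrow>real) \<Rightarrow> real" where
  "margk k \<phi> = (\<lambda>z. \<phi> (z(k:=1)) + \<phi> (z(k:=-1)))"
definition mtp2 :: "((nat\<Rightarrow>real) \<Rightarrow> real) \<Rightarrow> bool" where
  "mtp2 \<phi> = (\<forall>x y. \<phi> x * \<phi> y \<le> \<phi> (supf x y) * \<phi> (inff x y))"
definition spp :: "nat \<Rightarrow> nat \<Rightarrow> ((nat\<Rightarrow>real) \<Rightarrow> real) \<Rightarrow> bool" where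
  "spp u v \<phi> = (\<forall>x y. x u = 1 \<longrightarrow> x v = -1 \<longrightarrow> y u = -1 \<longrightarrow> y v = 1 \<longrightarrow>
      \<phi> x * \<phi> y < \<phi> (supf x y) * \<phi> (inff x y))"
definition posf :: "((nat\<Rightarrow>real) \<Rightarrow> real) \<Rightarrow> bool" where
  "posf \<phi> = (\<forall>x. \<phi> x > 0)"

lemma DF_empty[simp]: "DF {} z = {z}"
  by (auto simp: DF_def)

lemma DF_insert:
  assumes "k \<notin> F"
  shows "DF (insert k F) z = (\<lambda>(x,s). x(k:=s)) ` (DF F z \<times> {1,-1})"
proof
  show "DF (insert k F) z \<subseteq> (\<lambda>(x,s). x(k:=s)) ` (DF F z \<times> {1,-1})"
  proof
    fix x assume x: "x \<in> DF (insert k F) z"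
    have "x(k:=z k) \<in> DF F z" using x assms by (auto simp: DF_def)
    moreover have "x k \<in> {1,-1}" using x by (auto simp: DF_def)
    moreover have "x = (x(k:=z k))(k:=x k)" by simp
    ultimately show "x \<in> (\<lambda>(x,s). x(k:=s)) ` (DF F z \<times> {1,-1})"
      by (metis (no_types, lifting) SigmaI case_prod_conv image_eqI)
  qed
next
  show "(\<lambda>(x,s). x(k:=s)) ` (DF F z \<times> {1,-1}) \<subseteq> DF (insert k F) z"
    using assms by (force simp: DF_def)
qed

lemma DF_inj:
  assumes "k \<notin> F"
  shows "inj_on (\<lambda>(x,s). x(k:=s)) (DF F z \<times> {1,-1})"
proof (rule inj_onI, clarsimp)
  fix x s x' s'
  assume h: "x \<in> DF F z" "x' \<in> DF F z" "s = 1 \<or> s = -1" "s' = 1 \<or> s' = -1"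
    and e: "x(k := s) = x'(k := s')"
  have "s = s'" using fun_cong[OF e, of k] by simp
  moreover have "x = x'"
  proof
    fix i show "x i = x' i"
      using fun_cong[OF e, of i] h assms by (cases "i = k") (auto simp: DF_def)
  qed
  ultimately show "x = x' \<and> s = s'" by simp
qed

lemma DF_finite: "finite F \<Longrightarrow> finite (DF F z)"
proof (induction F rule: finite_induct)
  case empty then show ?case by simp
next
  case (insert k F) then show ?case by (simp add: DF_insert)
qed

lemma SF_empty[simp]: "SF {} \<phi> = \<phi>"
  by (auto simp: SF_def)

lemma SF_insert:
  assumes "finite F" "k \<notin> F"
  shows "SF (insert k F) \<phi> = SF F (margk k \<phi>)"
proof
  fix z
  have "SF (insert k F) \<phi> z = (\<Sum>p\<in>DF F z \<times> {1,-1}. \<phi> ((\<lambda>(x,s). x(k:=s)) p))"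
    unfolding SF_def DF_insert[OF assms(2)] using sum.reindex[OF DF_inj[OF assms(2)]]
    by (simp add: comp_def)
  also have "\<dots> = (\<Sum>x\<in>DF F z. \<Sum>s\<in>{1,-1}. \<phi> (x(k:=s)))"
    using sum.Sigma[of "DF F z" "\<lambda>_. {1,-1::real}" "\<lambda>x s. \<phi> (x(k:=s))", symmetric]
      DF_finite[OF assms(1)] by (simp add: split_def)
  also have "\<dots> = SF F (margk k \<phi>) z" by (simp add: SF_def margk_def)
  finally show "SF (insert k F) \<phi> z = SF F (margk k \<phi>) z" .
qed

lemma supf_upd: "supf (z(k:=a)) (z'(k:=b)) = (supf z z')(k:=max a b)"
  by (auto simp: supf_def)
lemma inff_upd: "inff (z(k:=a)) (z'(k:=b)) = (inff z z')(k:=min a b)"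
  by (auto simp: inff_def)

lemma four_ineq:
  fixes a b c d A D E E' :: real
  assumes "a \<le> A" "d \<le> D" "b \<le> E" "c \<le> E" "b * c \<le> E * E'" "E > 0" "b \<ge> 0" "c \<ge> 0"
  shows "a + b + c + d \<le> A + D + E + E'"
proof -
  have "(E - b) * (E - c) \<ge> 0" using assms by simp
  hence "E * (b + c) \<le> E * (E + E')" using assms by (simp add: algebra_simps)
  hence "b + c \<le> E + E'" using assms by simp
  thus ?thesis using assms by simp
qed

lemma four_ineq_strict:
  fixes a b c d A D E E' :: real
  assumes "a \<le> A" "d < D" "b \<le> E" "c \<le> E" "b * c \<le> E * E'" "E > 0" "b \<ge> 0" "c \<ge> 0"
  shows "a + b + c + d < A + D + E + E'"
proof -
  have "(E - b) * (E - c) \<ge> 0" using assms by simp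
  hence "E * (b + c) \<le> E * (E + E')" using assms by (simp add: algebra_simps)
  hence "b + c \<le> E + E'" using assms by simp
  thus ?thesis using assms by simp
qed

lemma posf_margk: "posf \<phi> \<Longrightarrow> posf (margk k \<phi>)"
  by (auto simp: posf_def margk_def intro: add_pos_pos)

lemma margk_step:
  assumes p: "posf \<phi>" and m: "mtp2 \<phi>"
  shows "margk k \<phi> z * margk k \<phi> z' \<le> margk k \<phi> (supf z z') * margk k \<phi> (inff z z')
     \<and> (\<phi> (z(k:=1)) * \<phi> (z'(k:=1)) < \<phi> ((supf z z')(k:=1)) * \<phi> ((inff z z')(k:=1)) \<longrightarrow>
       margk k \<phi> z * margk k \<phi> z' < margk k \<phi> (supf z z') * margk k \<phi> (inff z z'))"
proof -
  let ?S = "supf z z'" and ?I = "inff z z'"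
  define f1p where "f1p = \<phi> (z(k:=1))"
  define f1m where "f1m = \<phi> (z(k:=-1))"
  define f2p where "f2p = \<phi> (z'(k:=1))"
  define f2m where "f2m = \<phi> (z'(k:=-1))"
  define F3p where "F3p = \<phi> (?S(k:=1))"
  define F3m where "F3m = \<phi> (?S(k:=-1))"
  define F4p where "F4p = \<phi> (?I(k:=1))"
  define F4m where "F4m = \<phi> (?I(k:=-1))"
  have mm: "\<And>a b. \<phi> (z(k:=a)) * \<phi> (z'(k:=b)) \<le> \<phi> (?S(k:=max a b)) * \<phi> (?I(k:=min a b))"
    using m unfolding mtp2_def by (metis supf_upd inff_upd)
  have pp: "\<And>x. \<phi> x > 0" using p by (simp add: posf_def)
  have i1: "f1p * f2p \<le> F3p * F4p" using mm[of 1 1] by (simp add: f1p_def f2p_def F3p_def F4p_def)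
  have i2: "f1m * f2m \<le> F3m * F4m" using mm[of "-1" "-1"] by (simp add: f1m_def f2m_def F3m_def F4m_def)
  have i3: "f1p * f2m \<le> F3p * F4m" using mm[of 1 "-1"] by (simp add: f1p_def f2m_def F3p_def F4m_def)
  have i4: "f1m * f2p \<le> F3p * F4m" using mm[of "-1" 1] by (simp add: f1m_def f2p_def F3p_def F4m_def)
  have pos: "f1p > 0" "f1m > 0" "f2p > 0" "f2m > 0" "F3p > 0" "F3m > 0" "F4p > 0" "F4m > 0"
    by (simp_all add: pp f1p_def f1m_def f2p_def f2m_def F3p_def F3m_def F4p_def F4m_def)
  have bc: "(f1p * f2m) * (f1m * f2p) \<le> (F3p * F4m) * (F3m * F4p)"
  proof -
    have "(f1p * f2m) * (f1m * f2p) = (f1p * f2p) * (f1m * f2m)" by (simp add: algebra_simps)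
    also have "\<dots> \<le> (F3p * F4p) * (F3m * F4m)"
      using mult_mono[OF i1 i2] pos by simp
    also have "\<dots> = (F3p * F4m) * (F3m * F4p)" by (simp add: algebra_simps)
    finally show ?thesis .
  qed
  have L: "margk k \<phi> z * margk k \<phi> z' = f1m*f2m + f1p*f2m + f1m*f2p + f1p*f2p"
    by (simp add: margk_def f1p_def f1m_def f2p_def f2m_def algebra_simps)
  have R: "margk k \<phi> ?S * margk k \<phi> ?I = F3m*F4m + F3p*F4p + F3p*F4m + F3m*F4p"
    by (simp add: margk_def F3p_def F3m_def F4p_def F4m_def algebra_simps)
  have nn: "f1p * f2m \<ge> 0" "f1m * f2p \<ge> 0" "F3p * F4m > 0" using pos by simp_all
  show ?thesis
  proof
    show "margk k \<phi> z * margk k \<phi> z' \<le> margk k \<phi> ?S * margk k \<phi> ?I"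
      unfolding L R using four_ineq[OF i2 i1 i3 i4 bc nn(3) nn(1) nn(2)] by simp
    show "\<phi> (z(k:=1)) * \<phi> (z'(k:=1)) < \<phi> (?S(k:=1)) * \<phi> (?I(k:=1)) \<longrightarrow>
       margk k \<phi> z * margk k \<phi> z' < margk k \<phi> ?S * margk k \<phi> ?I"
    proof
      assume "\<phi> (z(k:=1)) * \<phi> (z'(k:=1)) < \<phi> (?S(k:=1)) * \<phi> (?I(k:=1))"
      hence st: "f1p * f2p < F3p * F4p" by (simp add: f1p_def f2p_def F3p_def F4p_def)
      show "margk k \<phi> z * margk k \<phi> z' < margk k \<phi> ?S * margk k \<phi> ?I"
        unfolding L R using four_ineq_strict[OF i2 st i3 i4 bc nn(3) nn(1) nn(2)] by simp
    qed
  qed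
qed

lemma mtp2_margk: "posf \<phi> \<Longrightarrow> mtp2 \<phi> \<Longrightarrow> mtp2 (margk k \<phi>)"
  using margk_step unfolding mtp2_def by blast

lemma spp_margk:
  assumes "posf \<phi>" "mtp2 \<phi>" "spp u v \<phi>" "k \<noteq> u" "k \<noteq> v"
  shows "spp u v (margk k \<phi>)"
  unfolding spp_def
proof (intro allI impI)
  fix x y :: "nat \<Rightarrow> real" assume h: "x u = 1" "x v = -1" "y u = -1" "y v = 1"
  have "\<phi> (x(k:=(1::real))) * \<phi> (y(k:=(1::real))) < \<phi> (supf (x(k:=(1::real))) (y(k:=(1::real)))) * \<phi> (inff (x(k:=(1::real))) (y(k:=(1::real))))"
    using assms(3) h assms(4,5) unfolding spp_def by auto
  then show "margk k \<phi> x * margk k \<phi> y < margk k \<phi> (supf x y) * margk k \<phi> (inff x y)"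
    using margk_step[OF assms(1,2), of k x y] by (simp add: supf_upd inff_upd)
qed

lemma SF_props:
  assumes "finite F"
  shows "posf \<phi> \<Longrightarrow> mtp2 \<phi> \<Longrightarrow> posf (SF F \<phi>) \<and> mtp2 (SF F \<phi>)"
  using assms
proof (induction F arbitrary: \<phi> rule: finite_induct)
  case empty then show ?case by simp
next
  case (insert k F)
  then show ?case by (simp add: SF_insert posf_margk mtp2_margk)
qed

lemma SF_spp:
  assumes "finite F"
  shows "posf \<phi> \<Longrightarrow> mtp2 \<phi> \<Longrightarrow> spp u v \<phi> \<Longrightarrow> u \<notin> F \<Longrightarrow> v \<notin> F \<Longrightarrow> spp u v (SF F \<phi>)"
  using assms
proof (induction F arbitrary: \<phi> rule: finite_induct)
  case empty then show ?case by simp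
next
  case (insert k F)
  then show ?case by (simp add: SF_insert posf_margk mtp2_margk spp_margk)
qed

definition cj :: "nat \<Rightarrow> (nat \<Rightarrow> nat \<Rightarrow> real) \<Rightarrow> (nat \<Rightarrow> real) \<Rightarrow> nat \<Rightarrow> (nat\<Rightarrow>real) \<Rightarrow> real" where
  "cj n J g j x = (\<Sum>i<n. x i * J i j) + g j"
definition Phi :: "nat \<Rightarrow> nat \<Rightarrow> (nat \<Rightarrow> nat \<Rightarrow> real) \<Rightarrow> (nat \<Rightarrow> real) \<Rightarrow> (nat \<Rightarrow> real)
   \<Rightarrow> (nat\<Rightarrow>real) \<Rightarrow> real" where
  "Phi n m J h g x = exp (\<Sum>i<n. h i * x i) * (\<Prod>j<m. 2 * cosh (cj n J g j x))"

lemma spins_DF: "spins k = DF {..<k} (\<lambda>_. 0)"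
  by (auto simp: spins_def DF_def)

lemma ysum: "(\<Sum>y\<in>spins m. exp (\<Sum>j<m. c j * y j)) = (\<Prod>j<m. 2 * cosh (c j))"
proof (induction m)
  case 0 then show ?case by (simp add: spins_DF)
next
  case (Suc m)
  have "(\<Sum>y\<in>spins (Suc m). exp (\<Sum>j<Suc m. c j * y j))
      = SF (insert m {..<m}) (\<lambda>y. exp (\<Sum>j<Suc m. c j * y j)) (\<lambda>_. 0)"
    by (simp add: SF_def spins_DF lessThan_Suc)
  also have "\<dots> = SF {..<m} (margk m (\<lambda>y. exp (\<Sum>j<Suc m. c j * y j))) (\<lambda>_. 0)"
    by (simp add: SF_insert)
  also have "\<dots> = (\<Sum>y\<in>spins m. 2 * cosh (c m) * exp (\<Sum>j<m. c j * y j))"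
    unfolding SF_def spins_DF
  proof (rule sum.cong[OF refl])
    fix y assume "y \<in> DF {..<m} (\<lambda>_. 0)"
    have e: "\<And>s. (\<Sum>j<Suc m. c j * (y(m:=s)) j) = (\<Sum>j<m. c j * y j) + c m * s"
      by simp
    show "margk m (\<lambda>y. exp (\<Sum>j<Suc m. c j * y j)) y = 2 * cosh (c m) * exp (\<Sum>j<m. c j * y j)"
      unfolding margk_def e by (simp add: cosh_field_def exp_add exp_diff exp_minus field_simps)
  qed
  also have "\<dots> = (\<Prod>j<Suc m. 2 * cosh (c j))"
    by (simp add: sum_distrib_left[symmetric] Suc)
  finally show ?case .
qed

lemma Phi_eq: "(\<Sum>y\<in>spins m. rbm_weight n m J h g x y) = Phi n m J h g x"
proof -
  have w: "rbm_weight n m J h g x y = exp (\<Sum>i<n. h i * x i) * exp (\<Sum>j<m. cj n J g j x * y j)" for y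
  proof -
    have "(\<Sum>j<m. cj n J g j x * y j) = (\<Sum>j<m. \<Sum>i<n. x i * J i j * y j) + (\<Sum>j<m. g j * y j)"
      by (simp add: cj_def sum_distrib_right sum_distrib_left sum.distrib algebra_simps)
    also have "(\<Sum>j<m. \<Sum>i<n. x i * J i j * y j) = (\<Sum>i<n. \<Sum>j<m. x i * J i j * y j)"
      by (rule sum.swap)
    finally show ?thesis by (simp add: rbm_weight_def exp_add[symmetric] algebra_simps)
  qed
  show ?thesis
    by (simp add: w sum_distrib_left[symmetric] ysum Phi_def)
qed

lemma cosh_prod: "cosh p * cosh q = (cosh (p+q) + cosh (p-q)) / 2" for p q :: real
  by (simp add: cosh_add cosh_diff)

lemma cosh_mtp:
  fixes p q P R :: real
  assumes "p + q = P + R" "\<bar>p - q\<bar> \<le> P - R"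
  shows "cosh p * cosh q \<le> cosh P * cosh R"
proof -
  have "cosh (p - q) \<le> cosh (P - R)"
    using cosh_real_nonneg_le_iff[of "\<bar>p-q\<bar>" "P - R"] assms by simp
  thus ?thesis using assms by (simp add: cosh_prod)
qed

lemma cosh_mtp_strict:
  fixes p q P R :: real
  assumes "p + q = P + R" "\<bar>p - q\<bar> < P - R"
  shows "cosh p * cosh q < cosh P * cosh R"
proof -
  have "cosh \<bar>p - q\<bar> < cosh (P - R)"
    using cosh_real_strict_mono[of "\<bar>p-q\<bar>" "P - R"] assms by simp
  thus ?thesis using assms by (simp add: cosh_prod)
qed

lemma lin_col:
  fixes a :: "nat \<Rightarrow> real" and b :: real and x y :: "nat \<Rightarrow> real"
  assumes a: "\<forall>i<n. a i \<ge> 0"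
  defines "L \<equiv> \<lambda>z. (\<Sum>i<n. a i * z i) + b"
  shows "L x + L y = L (supf x y) + L (inff x y)"
    and "\<bar>L x - L y\<bar> \<le> L (supf x y) - L (inff x y)"
    and "u < n \<Longrightarrow> v < n \<Longrightarrow> u \<noteq> v \<Longrightarrow> a u > 0 \<Longrightarrow> a v > 0 \<Longrightarrow> x u = 1 \<Longrightarrow> x v = -1
         \<Longrightarrow> y u = -1 \<Longrightarrow> y v = 1 \<Longrightarrow> \<bar>L x - L y\<bar> < L (supf x y) - L (inff x y)"
proof -
  have mm: "max s t + min s t = s + t" for s t :: real by (simp add: max_def min_def)
  have mm2: "max s t - min s t = \<bar>s - t\<bar>" for s t :: real by (simp add: max_def min_def)
  show "L x + L y = L (supf x y) + L (inff x y)"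
    unfolding L_def supf_def inff_def
    by (simp add: sum.distrib[symmetric] distrib_left[symmetric] mm add_ac)
  have dif: "L (supf x y) - L (inff x y) = (\<Sum>i<n. a i * \<bar>x i - y i\<bar>)"
    unfolding L_def supf_def inff_def
    by (simp add: sum_subtractf[symmetric] right_diff_distrib[symmetric] mm2)
  have dxy: "L x - L y = (\<Sum>i<n. a i * (x i - y i))"
    unfolding L_def by (simp add: sum_subtractf[symmetric] right_diff_distrib)
  have "\<bar>\<Sum>i<n. a i * (x i - y i)\<bar> \<le> (\<Sum>i<n. \<bar>a i * (x i - y i)\<bar>)" by (rule sum_abs)
  also have "\<dots> = (\<Sum>i<n. a i * \<bar>x i - y i\<bar>)"
    using a by (intro sum.cong) (auto simp: abs_mult)
  finally show "\<bar>L x - L y\<bar> \<le> L (supf x y) - L (inff x y)" using dif dxy by simp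
  assume h: "u < n" "v < n" "u \<noteq> v" "a u > 0" "a v > 0" "x u = 1" "x v = -1" "y u = -1" "y v = 1"
  have t1: "(\<Sum>i<n. a i * (\<bar>x i - y i\<bar> - (x i - y i))) \<ge> a v * (\<bar>x v - y v\<bar> - (x v - y v))"
    using a h by (intro member_le_sum) (auto intro!: mult_nonneg_nonneg)
  have t2: "(\<Sum>i<n. a i * (\<bar>x i - y i\<bar> + (x i - y i))) \<ge> a u * (\<bar>x u - y u\<bar> + (x u - y u))"
    using a h by (intro member_le_sum) (auto intro!: mult_nonneg_nonneg)
  have s1: "(\<Sum>i<n. a i * (\<bar>x i - y i\<bar> - (x i - y i))) = (L (supf x y) - L (inff x y)) - (L x - L y)"
    unfolding dif dxy by (simp add: sum_subtractf[symmetric] right_diff_distrib)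
  have s2: "(\<Sum>i<n. a i * (\<bar>x i - y i\<bar> + (x i - y i))) = (L (supf x y) - L (inff x y)) + (L x - L y)"
    unfolding dif dxy by (simp add: sum.distrib[symmetric] distrib_left)
  have "a v * (\<bar>x v - y v\<bar> - (x v - y v)) > 0" "a u * (\<bar>x u - y u\<bar> + (x u - y u)) > 0"
    using h by simp_all
  thus "\<bar>L x - L y\<bar> < L (supf x y) - L (inff x y)"
    using t1 t2 s1 s2 by (simp add: abs_less_iff)
qed

lemma col_sign:
  assumes lc: "locally_consistent n m J h g \<alpha> lam" and j: "j < m"
  obtains \<sigma> :: real where "\<sigma> = 1 \<or> \<sigma> = -1" "\<forall>i<n. \<sigma> * J i j \<ge> 0"
proof -
  from lc j have "(\<forall>i<n. J i j \<ge> 0) \<or> (\<forall>i<n. J i j \<le> 0)" by (simp add: locally_consistent_def)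
  then show ?thesis
  proof
    assume "\<forall>i<n. J i j \<ge> 0" then show ?thesis using that[of 1] by simp
  next
    assume "\<forall>i<n. J i j \<le> 0" then show ?thesis using that[of "-1"] by simp
  qed
qed

lemma cosh_cj:
  assumes "\<sigma> = 1 \<or> \<sigma> = -1"
  shows "cosh (cj n J g j z) = cosh ((\<Sum>i<n. (\<sigma> * J i j) * z i) + \<sigma> * g j)"
proof -
  have "(\<Sum>i<n. (\<sigma> * J i j) * z i) + \<sigma> * g j = \<sigma> * cj n J g j z"
    by (simp add: cj_def sum_distrib_left algebra_simps)
  then show ?thesis using assms by auto
qed

lemma col_le:
  assumes lc: "locally_consistent n m J h g \<alpha> lam" and j: "j < m"
  shows "cosh (cj n J g j x) * cosh (cj n J g j y)
          \<le> cosh (cj n J g j (supf x y)) * cosh (cj n J g j (inff x y))"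
proof -
  obtain \<sigma> where s: "\<sigma> = 1 \<or> \<sigma> = -1" "\<forall>i<n. \<sigma> * J i j \<ge> 0" using col_sign[OF lc j] by blast
  show ?thesis unfolding cosh_cj[OF s(1)]
    by (rule cosh_mtp[OF lin_col(1)[OF s(2)] lin_col(2)[OF s(2)]])
qed

lemma col_lt:
  assumes lc: "locally_consistent n m J h g \<alpha> lam" and j: "j < m"
    and h: "u < n" "v < n" "u \<noteq> v" "J u j \<noteq> 0" "J v j \<noteq> 0" "x u = 1" "x v = -1" "y u = -1" "y v = 1"
  shows "cosh (cj n J g j x) * cosh (cj n J g j y)
          < cosh (cj n J g j (supf x y)) * cosh (cj n J g j (inff x y))"
proof -
  obtain \<sigma> where s: "\<sigma> = 1 \<or> \<sigma> = -1" "\<forall>i<n. \<sigma> * J i j \<ge> 0" using col_sign[OF lc j] by blast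
  have "\<sigma> \<noteq> 0" using s(1) by auto
  hence "\<sigma> * J u j \<noteq> 0" "\<sigma> * J v j \<noteq> 0" using h(4,5) by auto
  moreover have "\<sigma> * J u j \<ge> 0" "\<sigma> * J v j \<ge> 0" using s(2) h(1,2) by auto
  ultimately have pu: "\<sigma> * J u j > 0" and pv: "\<sigma> * J v j > 0" by linarith+
  show ?thesis unfolding cosh_cj[OF s(1)]
    by (rule cosh_mtp_strict[OF lin_col(1)[OF s(2)] lin_col(3)[OF s(2) h(1,2,3) pu pv h(6-9)]])
qed

lemma Phi_pos: "posf (Phi n m J h g)"
  by (auto simp: posf_def Phi_def intro!: mult_pos_pos prod_pos)

lemma H_lin: "(\<Sum>i<n. h i * x i) + (\<Sum>i<n. h i * y i)
   = (\<Sum>i<n. h i * supf x y i) + (\<Sum>i<n. h i * inff x y i)"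
proof -
  have mm: "max s t + min s t = s + t" for s t :: real by (simp add: max_def min_def)
  show ?thesis unfolding supf_def inff_def
    by (simp add: sum.distrib[symmetric] distrib_left[symmetric] mm)
qed

lemma Phi_prod:
  "Phi n m J h g x * Phi n m J h g y = exp ((\<Sum>i<n. h i * x i) + (\<Sum>i<n. h i * y i)) *
     (\<Prod>j<m. (2 * cosh (cj n J g j x)) * (2 * cosh (cj n J g j y)))"
  unfolding Phi_def prod.distrib exp_add by (simp only: mult_ac)

lemma Phi_mtp2:
  assumes lc: "locally_consistent n m J h g \<alpha> lam"
  shows "mtp2 (Phi n m J h g)"
  unfolding mtp2_def
proof (intro allI)
  fix x y
  have "(\<Prod>j<m. (2 * cosh (cj n J g j x)) * (2 * cosh (cj n J g j y)))
     \<le> (\<Prod>j<m. (2 * cosh (cj n J g j (supf x y))) * (2 * cosh (cj n J g j (inff x y))))"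
    using col_le[OF lc] by (intro prod_mono) (auto simp: mult_ac)
  then show "Phi n m J h g x * Phi n m J h g y \<le> Phi n m J h g (supf x y) * Phi n m J h g (inff x y)"
    unfolding Phi_prod[of n m J h g x y] H_lin[where n=n and h=h and x=x and y=y] Phi_prod[of n m J h g "supf x y"]
    by (rule mult_left_mono) simp
qed

lemma Phi_spp:
  assumes lc: "locally_consistent n m J h g \<alpha> lam"
    and h: "u < n" "v < n" "u \<noteq> v" "j0 < m" "J u j0 \<noteq> 0" "J v j0 \<noteq> 0"
  shows "spp u v (Phi n m J h g)"
  unfolding spp_def
proof (intro allI impI)
  fix x y :: "nat \<Rightarrow> real" assume p: "x u = 1" "x v = -1" "y u = -1" "y v = 1"
  define f where "f = (\<lambda>j. (2 * cosh (cj n J g j x)) * (2 * cosh (cj n J g j y)))"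
  define G where "G = (\<lambda>j. (2 * cosh (cj n J g j (supf x y))) * (2 * cosh (cj n J g j (inff x y))))"
  have "f j0 < G j0" unfolding f_def G_def using col_lt[OF lc h(4,1,2,3,5,6) p] by simp
  moreover have "(\<Prod>j\<in>{..<m}-{j0}. f j) \<le> (\<Prod>j\<in>{..<m}-{j0}. G j)"
    unfolding f_def G_def using col_le[OF lc] by (intro prod_mono) (auto simp: mult_ac)
  moreover have "(\<Prod>j\<in>{..<m}-{j0}. f j) > 0" unfolding f_def by (intro prod_pos) auto
  moreover have "f j0 \<ge> 0" unfolding f_def by simp
  ultimately have "f j0 * (\<Prod>j\<in>{..<m}-{j0}. f j) < G j0 * (\<Prod>j\<in>{..<m}-{j0}. G j)"
    by (intro mult_less_le_imp_less) auto
  hence "(\<Prod>j<m. f j) < (\<Prod>j<m. G j)"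
    using h(4) by (simp add: prod.remove[of "{..<m}" j0])
  then show "Phi n m J h g x * Phi n m J h g y < Phi n m J h g (supf x y) * Phi n m J h g (inff x y)"
    unfolding Phi_prod[of n m J h g x y] H_lin[where n=n and h=h and x=x and y=y] Phi_prod[of n m J h g "supf x y"] f_def G_def
    by (rule mult_strict_left_mono) simp
qed

lemma DF_upd:
  assumes "k \<notin> F"
  shows "DF F (z(k:=s)) = (\<lambda>x. x(k:=s)) ` DF F z"
proof
  show "DF F (z(k:=s)) \<subseteq> (\<lambda>x. x(k:=s)) ` DF F z"
  proof
    fix x assume x: "x \<in> DF F (z(k:=s))"
    have "x(k:=z k) \<in> DF F z" using x assms by (auto simp: DF_def)
    moreover have "x = (x(k:=z k))(k:=s)" using x assms by (auto simp: DF_def)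
    ultimately show "x \<in> (\<lambda>x. x(k:=s)) ` DF F z" by blast
  qed
  show "(\<lambda>x. x(k:=s)) ` DF F z \<subseteq> DF F (z(k:=s))"
    using assms by (force simp: DF_def)
qed

lemma SF_upd:
  assumes "k \<notin> F"
  shows "SF F (\<lambda>x. \<phi> (x(k:=s))) z = SF F \<phi> (z(k:=s))"
proof -
  have "inj_on (\<lambda>x. x(k:=s)) (DF F z)"
  proof (rule inj_onI)
    fix x y assume h: "x \<in> DF F z" "y \<in> DF F z" "x(k:=s) = y(k:=s)"
    show "x = y"
    proof
      fix i show "x i = y i"
      proof (cases "i = k")
        case True then show ?thesis using h(1,2) assms by (simp add: DF_def)
      next
        case False then show ?thesis using fun_cong[OF h(3), of i] by simp
      qed
    qed
  qed
  then show ?thesis unfolding SF_def DF_upd[OF assms] by (simp add: sum.reindex)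
qed

lemma SF_margk:
  assumes "k \<notin> F"
  shows "SF F (margk k \<phi>) z = SF F \<phi> (z(k:=1)) + SF F \<phi> (z(k:=-1))"
proof -
  have "SF F (margk k \<phi>) z = SF F (\<lambda>x. \<phi> (x(k:=1))) z + SF F (\<lambda>x. \<phi> (x(k:=-1))) z"
    by (simp add: SF_def margk_def sum.distrib)
  then show ?thesis by (simp add: SF_upd[OF assms])
qed

definition dep :: "nat set \<Rightarrow> ((nat\<Rightarrow>real) \<Rightarrow> real) \<Rightarrow> bool" where
  "dep R \<phi> = (\<forall>x y. (\<forall>i\<in>R. x i = y i) \<longrightarrow> \<phi> x = \<phi> y)"

lemma SF_const:
  assumes "dep R \<phi>" "R \<inter> F = {}"
  shows "SF F (\<lambda>x. \<phi> x * \<psi> x) z = \<phi> z * SF F \<psi> z"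
proof -
  have "\<And>x. x \<in> DF F z \<Longrightarrow> \<phi> x = \<phi> z"
    using assms unfolding dep_def DF_def by blast
  then show ?thesis unfolding SF_def by (simp add: sum_distrib_left)
qed

lemma dep_margk: "dep R \<phi> \<Longrightarrow> dep R (margk k \<phi>)"
  unfolding dep_def margk_def
proof (intro allI impI)
  fix x y :: "nat\<Rightarrow>real" assume d: "\<forall>x y. (\<forall>i\<in>R. x i = y i) \<longrightarrow> \<phi> x = \<phi> y"
    and e: "\<forall>i\<in>R. x i = y i"
  have "\<phi> (x(k:=1)) = \<phi> (y(k:=1))" "\<phi> (x(k:=-1)) = \<phi> (y(k:=-1))"
    using e by (auto intro!: d[rule_format])
  then show "\<phi> (x(k:=1)) + \<phi> (x(k:=-1)) = \<phi> (y(k:=1)) + \<phi> (y(k:=-1))" by simp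
qed

lemma dep_indep: "dep R \<phi> \<Longrightarrow> k \<notin> R \<Longrightarrow> \<phi> (x(k:=s)) = \<phi> x"
  unfolding dep_def by auto

lemma margk_left: "(\<And>x s. A (x(k:=s)) = A x) \<Longrightarrow> margk k (\<lambda>x. A x * B x) = (\<lambda>x. A x * margk k B x)"
  by (auto simp: margk_def algebra_simps fun_eq_iff)

lemma margk_right: "(\<And>x s. B (x(k:=s)) = B x) \<Longrightarrow> margk k (\<lambda>x. A x * B x) = (\<lambda>x. margk k A x * B x)"
  by (auto simp: margk_def algebra_simps fun_eq_iff)

lemma obs_set:
  assumes "x \<in> spins n"
  shows "{x'\<in>spins n. \<forall>i\<in>A. x' i = x i} = DF ({..<n} - A) x"
proof (intro equalityI subsetI)
  fix y assume y: "y \<in> {x'\<in>spins n. \<forall>i\<in>A. x' i = x i}"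
  show "y \<in> DF ({..<n} - A) x" unfolding DF_def
  proof (intro CollectI conjI allI ballI impI)
    fix i assume "i \<in> {..<n} - A" then show "y i = 1 \<or> y i = -1" using y by (auto simp: spins_def)
  next
    fix i assume i: "i \<notin> {..<n} - A"
    show "y i = x i"
    proof (cases "i < n")
      case True then show ?thesis using i y by auto
    next
      case False then show ?thesis using y assms by (auto simp: spins_def)
    qed
  qed
next
  fix y assume y: "y \<in> DF ({..<n} - A) x"
  have "\<forall>i<n. y i = -1 \<or> y i = 1"
  proof (intro allI impI)
    fix i assume "i < n"
    show "y i = -1 \<or> y i = 1"
    proof (cases "i \<in> A")
      case True then show ?thesis using y assms \<open>i<n\<close> by (auto simp: DF_def spins_def)
    next
      case False then show ?thesis using y \<open>i<n\<close> by (auto simp: DF_def)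
    qed
  qed
  moreover have "\<forall>i\<ge>n. y i = 0" using y assms by (auto simp: DF_def spins_def)
  moreover have "\<forall>i\<in>A. y i = x i" using y by (auto simp: DF_def)
  ultimately show "y \<in> {x'\<in>spins n. \<forall>i\<in>A. x' i = x i}" by (simp add: spins_def)
qed

lemma obs_marg_SF:
  assumes "x \<in> spins n"
  shows "obs_marg n m J h g A x = SF ({..<n} - A) (Phi n m J h g) x / rbm_Z n m J h g"
  unfolding obs_marg_def Phi_eq by (simp add: obs_set[OF assms] SF_def)

lemma SF_pos: "finite F \<Longrightarrow> posf \<phi> \<Longrightarrow> posf (SF F \<phi>)"
proof (induction F arbitrary: \<phi> rule: finite_induct)
  case empty then show ?case by simp
next
  case (insert k F) then show ?case by (simp add: SF_insert posf_margk)
qed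

lemma Z_pos: "rbm_Z n m J h g > 0"
proof -
  have "rbm_Z n m J h g = SF {..<n} (Phi n m J h g) (\<lambda>_. 0)"
    unfolding rbm_Z_def Phi_eq by (simp add: SF_def spins_DF)
  moreover have "posf (SF {..<n} (Phi n m J h g))"
    using SF_pos[of "{..<n}" "Phi n m J h g"] Phi_pos by blast
  hence "SF {..<n} (Phi n m J h g) (\<lambda>_. 0) > 0" unfolding posf_def by blast
  ultimately show ?thesis by linarith
qed

definition Af :: "nat \<Rightarrow> nat \<Rightarrow> (nat \<Rightarrow> nat \<Rightarrow> real) \<Rightarrow> (nat \<Rightarrow> real) \<Rightarrow> (nat \<Rightarrow> real)
   \<Rightarrow> nat \<Rightarrow> (nat\<Rightarrow>real) \<Rightarrow> real" where
  "Af n m J h g u x = exp (h u * x u) * (\<Prod>j<m. if J u j \<noteq> 0 then 2 * cosh (cj n J g j x) else 1)"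
definition Bf :: "nat \<Rightarrow> nat \<Rightarrow> (nat \<Rightarrow> nat \<Rightarrow> real) \<Rightarrow> (nat \<Rightarrow> real) \<Rightarrow> (nat \<Rightarrow> real)
   \<Rightarrow> nat \<Rightarrow> (nat\<Rightarrow>real) \<Rightarrow> real" where
  "Bf n m J h g u x = exp (\<Sum>i<n. if i = u then 0 else h i * x i) *
      (\<Prod>j<m. if J u j \<noteq> 0 then 1 else 2 * cosh (cj n J g j x))"

lemma Phi_fac:
  assumes "u < n"
  shows "Phi n m J h g = (\<lambda>x. Af n m J h g u x * Bf n m J h g u x)"
proof
  fix x
  have "(\<Sum>i<n. h i * x i) = (\<Sum>i<n. (if i = u then h i * x i else 0) + (if i = u then 0 else h i * x i))"
    by (rule sum.cong) auto
  also have "\<dots> = h u * x u + (\<Sum>i<n. if i = u then 0 else h i * x i)"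
    using assms by (simp add: sum.distrib sum.delta)
  finally have s: "(\<Sum>i<n. h i * x i) = h u * x u + (\<Sum>i<n. if i = u then 0 else h i * x i)" .
  have "(\<Prod>j<m. 2 * cosh (cj n J g j x)) = (\<Prod>j<m. (if J u j \<noteq> 0 then 2 * cosh (cj n J g j x) else 1)
        * (if J u j \<noteq> 0 then 1 else 2 * cosh (cj n J g j x)))"
    by (rule prod.cong) auto
  also have "\<dots> = (\<Prod>j<m. if J u j \<noteq> 0 then 2 * cosh (cj n J g j x) else 1)
        * (\<Prod>j<m. if J u j \<noteq> 0 then 1 else 2 * cosh (cj n J g j x))"
    by (rule prod.distrib)
  finally have p: "(\<Prod>j<m. 2 * cosh (cj n J g j x)) = \<dots>" .
  show "Phi n m J h g x = Af n m J h g u x * Bf n m J h g u x"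
    unfolding Phi_def Af_def Bf_def s p exp_add by (simp only: mult_ac)
qed

lemma Af_dep: "dep (insert u (N2 n m J u - {u})) (Af n m J h g u)"
  unfolding dep_def
proof (intro allI impI)
  fix x y :: "nat \<Rightarrow> real" assume e: "\<forall>i\<in>insert u (N2 n m J u - {u}). x i = y i"
  have "(if J u j \<noteq> 0 then 2 * cosh (cj n J g j x) else 1) = (if J u j \<noteq> 0 then 2 * cosh (cj n J g j y) else 1)"
    if j: "j < m" for j
  proof (cases "J u j \<noteq> 0")
    case True
    have "cj n J g j x = cj n J g j y" unfolding cj_def
    proof (intro arg_cong2[where f="(+)"] refl sum.cong)
      fix i assume i: "i \<in> {..<n}"
      show "x i * J i j = y i * J i j"
      proof (cases "J i j = 0")
        case False
        then have "i \<in> N2 n m J u" using i j True by (auto simp: N2_def)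
        then show ?thesis using e by (cases "i = u") auto
      qed simp
    qed
    then show ?thesis by simp
  qed simp
  then have "(\<Prod>j<m. if J u j \<noteq> 0 then 2 * cosh (cj n J g j x) else 1) = (\<Prod>j<m. if J u j \<noteq> 0 then 2 * cosh (cj n J g j y) else 1)"
    by (intro prod.cong) auto
  moreover have "x u = y u" using e by auto
  ultimately show "Af n m J h g u x = Af n m J h g u y" unfolding Af_def by simp
qed

lemma Bf_indep: "Bf n m J h g u (x(u:=s)) = Bf n m J h g u x"
proof -
  have "(\<Sum>i<n. if i = u then 0 else h i * (x(u:=s)) i) = (\<Sum>i<n. if i = u then 0 else h i * x i)"
    by (intro sum.cong) auto
  moreover have "(\<Prod>j<m. if J u j \<noteq> 0 then 1 else 2 * cosh (cj n J g j (x(u:=s))))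
     = (\<Prod>j<m. if J u j \<noteq> 0 then 1 else 2 * cosh (cj n J g j x))"
  proof (intro prod.cong refl)
    fix j
    show "(if J u j \<noteq> 0 then 1 else 2 * cosh (cj n J g j (x(u:=s)))) = (if J u j \<noteq> 0 then 1 else 2 * cosh (cj n J g j x))"
    proof (cases "J u j = 0")
      case True
      have "cj n J g j (x(u:=s)) = cj n J g j x" unfolding cj_def
        by (intro arg_cong2[where f="(+)"] refl sum.cong) (auto simp: True)
      then show ?thesis by simp
    qed simp
  qed
  ultimately show ?thesis unfolding Bf_def by simp
qed


theorem mainTheorem4:
  fixes n m :: nat and J :: "nat \<Rightarrow> nat \<Rightarrow> real" and h g :: "nat \<Rightarrow> real"
    and \<alpha> lam :: real and u :: nat
  assumes "locally_consistent n m J h g \<alpha> lam"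
    and "\<alpha> > 0"
    and "u < n"
  shows "is_two_hop_markov_nbhd n m J h g u (N2 n m J u - {u})"
proof -
  note lc = assms(1) and un = assms(3)
  let ?S = "N2 n m J u - {u}"
  let ?Z = "rbm_Z n m J h g"
  define P where "P = Phi n m J h g"
  have Zp: "?Z > 0" by (rule Z_pos)
  have sep: "markov_separating n m J h g u ?S"
    unfolding markov_separating_def
  proof (intro conjI ballI)
    show "?S \<subseteq> {..<n} - {u}" by (auto simp: N2_def)
    fix v assume v: "v \<in> {..<n} - (?S \<union> {u})"
    hence vn: "v < n" and vS: "v \<notin> ?S" and vu: "v \<noteq> u" by auto
    define R where "R = insert u ?S"
    define A where "A = Af n m J h g u"
    define B where "B = Bf n m J h g u"
    define a where "a = margk u A"
    define W where "W = {..<n} - insert u (insert v ?S)"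
    have fW: "finite W" by (simp add: W_def)
    have dA: "dep R A" unfolding R_def A_def by (rule Af_dep)
    have da: "dep R a" unfolding a_def by (rule dep_margk[OF dA])
    have RW: "R \<inter> W = {}" by (auto simp: R_def W_def)
    have vR: "v \<notin> R" using vS vu by (auto simp: R_def)
    have Bu: "\<And>x s. B (x(u:=s)) = B x" unfolding B_def by (rule Bf_indep)
    have Av: "\<And>x s. A (x(v:=s)) = A x" using dep_indep[OF dA vR] by blast
    have av: "\<And>x s. a (x(v:=s)) = a x" using dep_indep[OF da vR] by blast
    have PF: "P = (\<lambda>x. A x * B x)" unfolding P_def A_def B_def by (rule Phi_fac[OF un])
    have uW: "u \<notin> W" "u \<notin> insert v W" using vu by (auto simp: W_def)
    have vW: "v \<notin> W" by (auto simp: W_def)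
    have e1: "{..<n} - insert u (insert v ?S) = W" by (simp add: W_def)
    have e2: "{..<n} - ?S = insert u (insert v W)" using un vn vS by (auto simp: W_def)
    have e3: "{..<n} - insert u ?S = insert v W" using un vn vS vu by (auto simp: W_def)
    have e4: "{..<n} - insert v ?S = insert u W" using un vn vS vu by (auto simp: W_def)
    show "obs_cond_indep n m J h g u v ?S"
      unfolding obs_cond_indep_def
    proof
      fix x assume x: "x \<in> spins n"
      have M1: "SF W P x = A x * SF W B x" unfolding PF by (rule SF_const[OF dA RW])
      have M4: "SF (insert u W) P x = a x * SF W B x"
        unfolding SF_insert[OF fW uW(1)] PF margk_right[of B u A, OF Bu] a_def[symmetric]
        by (rule SF_const[OF da RW])
      have M3: "SF (insert v W) P x = A x * SF W (margk v B) x"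
        unfolding SF_insert[OF fW vW] PF margk_left[of A v B, OF Av]
        by (rule SF_const[OF dA RW])
      have M2: "SF (insert u (insert v W)) P x = a x * SF W (margk v B) x"
      proof -
        have "SF (insert u (insert v W)) P x = SF (insert v W) (\<lambda>x. a x * B x) x"
          using SF_insert[of "insert v W" u P] fW uW(2)
          unfolding PF margk_right[of B u A, OF Bu] a_def[symmetric] by simp
        also have "\<dots> = SF W (\<lambda>x. a x * margk v B x) x"
          unfolding SF_insert[OF fW vW] margk_left[of a v B, OF av] ..
        also have "\<dots> = a x * SF W (margk v B) x" by (rule SF_const[OF da RW])
        finally show ?thesis .
      qed
      show "obs_marg n m J h g (insert u (insert v ?S)) x * obs_marg n m J h g ?S x =
          obs_marg n m J h g (insert u ?S) x * obs_marg n m J h g (insert v ?S) x"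
        unfolding obs_marg_SF[OF x] e1 e2 e3 e4 P_def[symmetric] M1 M2 M3 M4
        by (simp add: field_simps)
    qed
  qed
  have min: "\<forall>S'. markov_separating n m J h g u S' \<longrightarrow> ?S \<subseteq> S'"
  proof (intro allI impI subsetI)
    fix S' w assume sep': "markov_separating n m J h g u S'" and w: "w \<in> ?S"
    show "w \<in> S'"
    proof (rule ccontr)
      assume wS': "w \<notin> S'"
      from w obtain j0 where wn: "w < n" and wu: "w \<noteq> u" and j0: "j0 < m" "J w j0 \<noteq> 0" "J u j0 \<noteq> 0"
        by (auto simp: N2_def)
      have S'sub: "S' \<subseteq> {..<n} - {u}" using sep' by (simp add: markov_separating_def)
      have ci: "obs_cond_indep n m J h g u w S'"
        using sep' wn wu wS' by (simp add: markov_separating_def)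
      define W where "W = {..<n} - insert u (insert w S')"
      have fW: "finite W" by (simp add: W_def)
      have uW: "u \<notin> W" "u \<notin> insert w W" using wu by (auto simp: W_def)
      have wW: "w \<notin> W" by (auto simp: W_def)
      have uS': "u \<notin> S'" using S'sub by auto
      define \<Psi> where "\<Psi> = SF W P"
      have sp: "spp u w \<Psi>" unfolding \<Psi>_def P_def
        by (rule SF_spp[OF fW Phi_pos Phi_mtp2[OF lc] Phi_spp[OF lc un wn wu[symmetric] j0(1,3,2)] uW(1) wW])
      define x0 :: "nat \<Rightarrow> real" where "x0 = (\<lambda>i. if i < n then 1 else 0)"
      have x0: "x0 \<in> spins n" by (simp add: x0_def spins_def)
      have x0u: "x0 u = 1" and x0w: "x0 w = 1" using un wn by (simp_all add: x0_def)
      have e1: "{..<n} - insert u (insert w S') = W" by (simp add: W_def)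
      have e2: "{..<n} - S' = insert u (insert w W)" using un wn uS' wS' by (auto simp: W_def)
      have e3: "{..<n} - insert u S' = insert w W" using un wn wS' wu by (auto simp: W_def)
      have e4: "{..<n} - insert w S' = insert u W" using un wn uS' wu by (auto simp: W_def)
      define q where "q = (\<lambda>a b. \<Psi> (x0(u:=a, w:=b)))"
      have p1: "x0(u:=1, w:=1) = x0" using x0u x0w by auto
      have p2: "x0(w:=s) = x0(u:=1, w:=s)" for s using x0u by auto
      have p3: "x0(u:=s) = x0(u:=s, w:=1)" for s using x0w wu by (auto simp: fun_eq_iff)
      have p4: "x0(w:=b, u:=a) = x0(u:=a, w:=b)" for a b using wu by (simp add: fun_upd_twist)
      have m1: "SF W P x0 = q 1 1" unfolding q_def \<Psi>_def p1 ..
      have m3: "SF (insert w W) P x0 = q 1 1 + q 1 (-1)"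
        unfolding SF_insert[OF fW wW] SF_margk[OF wW] q_def \<Psi>_def p2 ..
      have m4: "SF (insert u W) P x0 = q 1 1 + q (-1) 1"
        unfolding SF_insert[OF fW uW(1)] SF_margk[OF uW(1)] q_def \<Psi>_def by (simp only: p3[symmetric])
      have m2: "SF (insert u (insert w W)) P x0 = q 1 1 + q (-1) 1 + q 1 (-1) + q (-1) (-1)"
      proof -
        have "SF (insert u (insert w W)) P x0 = SF W (margk w (margk u P)) x0"
          using SF_insert[of "insert w W" u P] SF_insert[OF fW wW] fW uW(2) by simp
        also have "\<dots> = SF W (margk u P) (x0(w:=1)) + SF W (margk u P) (x0(w:=-1))"
          by (rule SF_margk[OF wW])
        also have "\<dots> = q 1 1 + q (-1) 1 + q 1 (-1) + q (-1) (-1)"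
          unfolding SF_margk[OF uW(1)] q_def \<Psi>_def p4 by simp
        finally show ?thesis .
      qed
      have "obs_marg n m J h g (insert u (insert w S')) x0 * obs_marg n m J h g S' x0 =
          obs_marg n m J h g (insert u S') x0 * obs_marg n m J h g (insert w S') x0"
        using ci x0 unfolding obs_cond_indep_def by blast
      hence "q 1 1 / ?Z * ((q 1 1 + q (-1) 1 + q 1 (-1) + q (-1) (-1)) / ?Z)
            = (q 1 1 + q 1 (-1)) / ?Z * ((q 1 1 + q (-1) 1) / ?Z)"
        unfolding obs_marg_SF[OF x0] e1 e2 e3 e4 P_def[symmetric] m1 m2 m3 m4 .
      hence "q 1 1 * (q 1 1 + q (-1) 1 + q 1 (-1) + q (-1) (-1)) = (q 1 1 + q 1 (-1)) * (q 1 1 + q (-1) 1)"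
        using Zp by (simp add: field_simps)
      hence eq: "q 1 1 * q (-1) (-1) = q 1 (-1) * q (-1) 1" by (simp add: algebra_simps)
      have s1: "supf (x0(u:=1, w:=-1)) (x0(u:=-1, w:=1)) = x0(u:=1, w:=1)"
        using wu by (auto simp: supf_def fun_eq_iff)
      have s2: "inff (x0(u:=1, w:=-1)) (x0(u:=-1, w:=1)) = x0(u:=-1, w:=-1)"
        using wu by (auto simp: inff_def fun_eq_iff)
      have "q 1 (-1) * q (-1) 1 < q 1 1 * q (-1) (-1)"
        using sp wu unfolding spp_def q_def
        by (metis (no_types, lifting) s1 s2 fun_upd_same fun_upd_other)
      with eq show False by simp
    qed
  qed
  show ?thesis unfolding is_two_hop_markov_nbhd_def using sep min by blast
qed

end
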